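(* Let $G$ be a connected graph. If $\sigma_2(G)\ge 2\widetilde{\alpha}(G)-2$, then $G$ is traceable (i.e., $G$ contains a path through every vertex).
   Context: All graphs are finite and simple. For a graph $G$ that is not complete, $\sigma_2(G)=\min\{d_G(u)+d_G(v): u,v\in V(G),\ u\ne v,\ uv\notin E(G)\}$; if $G$ is complete, $\sigma_2(G)=\infty$. An $(s,t)$-bipartite-hole in $G$ consists of two disjoint vertex sets $S,T\subseteq V(G)$ with $|S|=s$, $|T|=t$ and no edge of $G$ having one endpoint in $S$ and the other in $T$. The bipartite-hole-number $\widetilde{\alpha}(G)$ is the minimum integer $k$ such that there exist positive integers $s,t$ with $s+t=k+1$ for which $G$ contains no $(s,t)$-bipartite-hole. *)

theory Defs
  imports Main "HOL-Library.Extended_Nat"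
begin

definition simple_graph :: "'a set \<Rightarrow> ('a \<Rightarrow> 'a \<Rightarrow> bool) \<Rightarrow> bool" where
  "simple_graph V E \<longleftrightarrow> finite V \<and> (\<forall>u v. E u v \<longrightarrow> u \<in> V \<and> v \<in> V)
     \<and> (\<forall>u v. E u v \<longrightarrow> E v u) \<and> (\<forall>u. \<not> E u u)"

definition degree :: "'a set \<Rightarrow> ('a \<Rightarrow> 'a \<Rightarrow> bool) \<Rightarrow> 'a \<Rightarrow> nat" where
  "degree V E u = card {v \<in> V. E u v}"

text \<open>sigma_2; the infimum of the empty set in enat is infinity (complete graph case).\<close>
definition sigma2 :: "'a set \<Rightarrow> ('a \<Rightarrow> 'a \<Rightarrow> bool) \<Rightarrow> enat" where
  "sigma2 V E = Inf {enat (degree V E u + degree V E v) | u v.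
                      u \<in> V \<and> v \<in> V \<and> u \<noteq> v \<and> \<not> E u v}"

definition has_bhole :: "'a set \<Rightarrow> ('a \<Rightarrow> 'a \<Rightarrow> bool) \<Rightarrow> nat \<Rightarrow> nat \<Rightarrow> bool" where
  "has_bhole V E s t \<longleftrightarrow> (\<exists>S T. S \<subseteq> V \<and> T \<subseteq> V \<and> S \<inter> T = {} \<and>
      card S = s \<and> card T = t \<and> (\<forall>x\<in>S. \<forall>y\<in>T. \<not> E x y))"

definition bhole_number :: "'a set \<Rightarrow> ('a \<Rightarrow> 'a \<Rightarrow> bool) \<Rightarrow> nat" where
  "bhole_number V E = (LEAST k. \<exists>s t. s > 0 \<and> t > 0 \<and> s + t = k + 1 \<and> \<not> has_bhole V E s t)"

definition is_path :: "'a set \<Rightarrow> ('a \<Rightarrow> 'a \<Rightarrow> bool) \<Rightarrow> 'a list \<Rightarrow> bool" where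
  "is_path V E p \<longleftrightarrow> p \<noteq> [] \<and> distinct p \<and> set p \<subseteq> V \<and>
      (\<forall>i. Suc i < length p \<longrightarrow> E (p ! i) (p ! Suc i))"

definition connected_graph :: "'a set \<Rightarrow> ('a \<Rightarrow> 'a \<Rightarrow> bool) \<Rightarrow> bool" where
  "connected_graph V E \<longleftrightarrow> V \<noteq> {} \<and>
     (\<forall>u\<in>V. \<forall>v\<in>V. \<exists>p. is_path V E p \<and> hd p = u \<and> last p = v)"

definition traceable :: "'a set \<Rightarrow> ('a \<Rightarrow> 'a \<Rightarrow> bool) \<Rightarrow> bool" where
  "traceable V E \<longleftrightarrow> (\<exists>p. is_path V E p \<and> set p = V)"

end

theory Submission
  imports Defs
begin

lemma is_path_alt: "is_path V E p \<longleftrightarrow> p \<noteq> [] \<and> distinct p \<and> set p \<subseteq> V \<and> successively E p"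
  unfolding is_path_def successively_conv_nth by blast

lemma succ_take: "successively R xs \<Longrightarrow> successively R (take n xs)"
  by (metis append_take_drop_id successively_append_iff)

lemma succ_drop: "successively R xs \<Longrightarrow> successively R (drop n xs)"
  by (metis append_take_drop_id successively_append_iff)

lemma succ_rev_sym: "(\<And>a b. R a b \<Longrightarrow> R b a) \<Longrightarrow> successively R xs \<Longrightarrow> successively R (rev xs)"
  by (auto intro: successively_mono)

lemma last_take_nth: "0 < n \<Longrightarrow> n \<le> length xs \<Longrightarrow> last (take n xs) = xs ! (n - 1)"
  by (subst last_conv_nth) (auto simp: min_def)

lemma rtranclp_path:
  assumes "R\<^sup>*\<^sup>* a b"
  shows "\<exists>q. q \<noteq> [] \<and> hd q = a \<and> last q = b \<and> distinct q \<and> successively R q \<and> (\<forall>x\<in>set q. R\<^sup>*\<^sup>* a x)"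
  using assms
proof (induction rule: rtranclp_induct)
  case base
  then show ?case by (intro exI[of _ "[a]"]) auto
next
  case (step b c)
  then obtain q where q: "q \<noteq> []" "hd q = a" "last q = b" "distinct q" "successively R q"
    "\<forall>x\<in>set q. R\<^sup>*\<^sup>* a x" by blast
  show ?case
  proof (cases "c \<in> set q")
    case True
    then obtain j where j: "j < length q" "q ! j = c" by (auto simp: in_set_conv_nth)
    show ?thesis
      apply (rule exI[of _ "take (Suc j) q"])
      using q j by (auto simp: last_take_nth succ_take dest: in_set_takeD)
  next
    case False
    show ?thesis
      apply (rule exI[of _ "q @ [c]"])
      using q False step by (auto simp: successively_append_iff)
  qed
qed

lemma ins_path:
  assumes sym: "\<And>a b. E a b \<Longrightarrow> E b a"
    and P: "is_path V E P" and q: "is_path V E q" "set q \<inter> set P = {}"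
    and i: "0 < i" "i < length P"
    and e1: "E (P ! (i - 1)) (hd q)" and e2: "E (last q) (P ! i)"
  shows "is_path V E (take i P @ q @ drop i P) \<and> hd (take i P @ q @ drop i P) = hd P
       \<and> length (take i P @ q @ drop i P) = length P + length q"
proof -
  have dP: "distinct P" "set P \<subseteq> V" "successively E P" "P \<noteq> []" using P by (auto simp: is_path_alt)
  have dq: "distinct q" "set q \<subseteq> V" "successively E q" "q \<noteq> []" using q by (auto simp: is_path_alt)
  have lt: "last (take i P) = P ! (i - 1)" using i by (simp add: last_take_nth)
  have hd: "hd (drop i P) = P ! i" using i by (simp add: hd_drop_conv_nth)
  have disj: "set (take i P) \<inter> set (drop i P) = {}"
    using dP by (simp add: set_take_disj_set_drop_if_distinct)
  have "set (take i P) \<subseteq> set P" "set (drop i P) \<subseteq> set P" by (auto dest: in_set_takeD in_set_dropD)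
  then have "distinct (take i P @ q @ drop i P)"
    using dP dq disj q(2) by (auto simp: distinct_append)
  moreover have "set (take i P @ q @ drop i P) \<subseteq> V"
    using dP dq by (auto dest: in_set_takeD in_set_dropD)
  moreover have "successively E (take i P @ q @ drop i P)"
    using dP dq i lt hd e1 e2 by (auto simp: successively_append_iff succ_take succ_drop)
  moreover have "hd (take i P @ q @ drop i P) = hd P" using i dP by auto
  moreover have "length (take i P @ q @ drop i P) = length P + length q" using i by auto
  ultimately show ?thesis using dq by (auto simp: is_path_alt)
qed

lemma rev_path:
  assumes sym: "\<And>a b. E a b \<Longrightarrow> E b a"
    and P: "is_path V E P" and q: "is_path V E q" "set q \<inter> set P = {}"
    and ij: "0 < i" "i < j" "j < length P"
    and e0: "E (P ! (i - 1)) (P ! (j - 1))"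
    and e1: "E (P ! i) (hd q)" and e2: "E (last q) (P ! j)"
  shows "is_path V E (take i P @ rev (take (j - i) (drop i P)) @ q @ drop j P)
       \<and> hd (take i P @ rev (take (j - i) (drop i P)) @ q @ drop j P) = hd P
       \<and> length (take i P @ rev (take (j - i) (drop i P)) @ q @ drop j P) = length P + length q"
proof -
  define A where "A = take i P"
  define B where "B = take (j - i) (drop i P)"
  define C where "C = drop j P"
  have PABC: "P = A @ B @ C"
    unfolding A_def B_def C_def
    by (metis append_take_drop_id drop_drop le_add_diff_inverse2 less_imp_le ij(2) add.commute)
  have dP: "distinct P" "set P \<subseteq> V" "successively E P" "P \<noteq> []" using P by (auto simp: is_path_alt)
  have dq: "distinct q" "set q \<subseteq> V" "successively E q" "q \<noteq> []" using q by (auto simp: is_path_alt)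
  have dABC: "distinct (A @ B @ C)" using dP PABC by simp
  have sABC: "successively E (A @ B @ C)" using dP PABC by simp
  have Ane: "A \<noteq> []" and Bne: "B \<noteq> []" and Cne: "C \<noteq> []"
    using ij unfolding A_def B_def C_def by auto
  have lA: "last A = P ! (i - 1)" unfolding A_def using ij by (simp add: last_take_nth)
  have hB: "hd B = P ! i" unfolding B_def using ij by (simp add: hd_drop_conv_nth)
  have lB: "last B = P ! (j - 1)"
  proof -
    have "last B = (drop i P) ! (j - i - 1)" unfolding B_def using ij by (simp add: last_take_nth)
    also have "\<dots> = P ! (j - 1)" using ij by simp
    finally show ?thesis .
  qed
  have hC: "hd C = P ! j" unfolding C_def using ij by (simp add: hd_drop_conv_nth)
  have sB: "successively E B" "successively E A" "successively E C"
    using sABC by (auto simp: successively_append_iff)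
  have rB: "successively (\<lambda>x y. E y x) B" using sB(1) by (rule successively_mono) (use sym in blast)
  have "distinct (A @ rev B @ q @ C)"
    using dABC dq q(2) PABC by (auto simp: distinct_append)
  moreover have "set (A @ rev B @ q @ C) \<subseteq> V"
    using dP dq PABC by auto
  moreover have "successively E (A @ rev B @ q @ C)"
    using sB rB dq Ane Bne Cne lA hB lB hC e0 e1 e2 sym
    by (auto simp: successively_append_iff succ_rev_sym hd_rev last_rev)
  moreover have "hd (A @ rev B @ q @ C) = hd P" using Ane PABC by simp
  moreover have "length (A @ rev B @ q @ C) = length P + length q" using PABC by simp
  ultimately show ?thesis using dq unfolding A_def B_def C_def by (auto simp: is_path_alt)
qed

lemma rev_end_path:
  assumes sym: "\<And>a b. E a b \<Longrightarrow> E b a"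
    and P: "is_path V E P" and y: "y \<in> V" "y \<notin> set P"
    and i: "0 < i" "i < length P"
    and e0: "E (P ! (i - 1)) (last P)" and e1: "E (P ! i) y"
  shows "is_path V E (take i P @ rev (drop i P) @ [y])
       \<and> hd (take i P @ rev (drop i P) @ [y]) = hd P
       \<and> length (take i P @ rev (drop i P) @ [y]) = length P + 1"
proof -
  define A where "A = take i P"
  define C where "C = drop i P"
  have PAC: "P = A @ C" unfolding A_def C_def by simp
  have dP: "distinct P" "set P \<subseteq> V" "successively E P" "P \<noteq> []" using P by (auto simp: is_path_alt)
  have Ane: "A \<noteq> []" and Cne: "C \<noteq> []" using i unfolding A_def C_def by auto
  have lA: "last A = P ! (i - 1)" unfolding A_def using i by (simp add: last_take_nth)
  have hC: "hd C = P ! i" unfolding C_def using i by (simp add: hd_drop_conv_nth)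
  have lC: "last C = last P" unfolding C_def using i by simp
  have sAC: "successively E A" "successively E C" using dP PAC by (auto simp: successively_append_iff)
  have rC: "successively (\<lambda>x y. E y x) C" using sAC(2) by (rule successively_mono) (use sym in blast)
  have "distinct (A @ rev C @ [y])" using dP PAC y by (auto simp: distinct_append)
  moreover have "set (A @ rev C @ [y]) \<subseteq> V" using dP PAC y by auto
  moreover have "successively E (A @ rev C @ [y])"
    using sAC rC Ane Cne lA hC lC e0 e1 sym
    by (auto simp: successively_append_iff succ_rev_sym hd_rev last_rev)
  moreover have "hd (A @ rev C @ [y]) = hd P" using Ane PAC by simp
  moreover have "length (A @ rev C @ [y]) = length P + 1" using PAC by simp
  ultimately show ?thesis unfolding A_def C_def by (auto simp: is_path_alt)
qed

lemma sg_facts: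
  assumes "simple_graph V E"
  shows "finite V" "\<And>a b. E a b \<Longrightarrow> E b a" "\<And>a. \<not> E a a" "\<And>a b. E a b \<Longrightarrow> a \<in> V \<and> b \<in> V"
  using assms unfolding simple_graph_def by blast+

lemma bhole_intro:
  assumes sg: "simple_graph V E" and "S \<subseteq> V" "T \<subseteq> V" "S \<inter> T = {}"
    and ne: "\<And>x y. x \<in> S \<Longrightarrow> y \<in> T \<Longrightarrow> \<not> E x y"
  shows "has_bhole V E (card S) (card T) \<and> has_bhole V E (card T) (card S)"
proof -
  have sym: "\<And>a b. E a b \<Longrightarrow> E b a" using sg_facts[OF sg] by blast
  have c1: "\<forall>x\<in>S. \<forall>y\<in>T. \<not> E x y" using ne by blast
  have c2: "\<forall>x\<in>T. \<forall>y\<in>S. \<not> E x y" using ne sym by blast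
  have "has_bhole V E (card S) (card T)" unfolding has_bhole_def
    by (rule exI[of _ S], rule exI[of _ T]) (simp add: assms c1)
  moreover have "has_bhole V E (card T) (card S)" unfolding has_bhole_def
    by (rule exI[of _ T], rule exI[of _ S]) (simp add: assms c2 Int_commute)
  ultimately show ?thesis by blast
qed

lemma hole_lemma:
  assumes sg: "simple_graph V E"
    and HV: "H \<subseteq> V" and IV: "I \<subseteq> V" and XV: "X \<subseteq> V" and HI: "H \<inter> I = {}" and HX: "H \<inter> X = {}"
    and Hnb: "\<And>a b. a \<in> H \<Longrightarrow> E a b \<Longrightarrow> b \<in> H \<union> X"
    and Iind: "\<And>a b. a \<in> I \<Longrightarrow> b \<in> I \<Longrightarrow> \<not> E a b"
    and HIe: "\<And>a b. a \<in> H \<Longrightarrow> b \<in> I \<Longrightarrow> \<not> E a b"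
    and cHI: "k + 1 \<le> card H + card I" and cI: "1 \<le> card I"
    and cR: "k \<le> card (V - (H \<union> X)) + 1"
    and st: "0 < s" "0 < t" "s + t = k + 1"
  shows "has_bhole V E s t"
proof -
  note F = sg_facts[OF sg]
  have fin: "finite H" "finite I" "finite (V - (H \<union> X))" using F(1) HV IV finite_subset by auto
  define m where "m = min s t"
  define M where "M = k + 1 - m"
  have mM: "(s = m \<and> t = M) \<or> (s = M \<and> t = m)" unfolding m_def M_def using st by auto
  have key: "\<exists>S T. S \<subseteq> V \<and> T \<subseteq> V \<and> S \<inter> T = {} \<and> card S = m \<and> card T = M \<and>
                 (\<forall>x\<in>S. \<forall>y\<in>T. \<not> E x y)"
  proof (cases "m \<le> card I")
    case True
    then obtain B where B: "B \<subseteq> I" "card B = m" by (meson obtain_subset_with_card_n)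
    have "card ((H \<union> I) - B) = card H + card I - m"
    proof -
      have "finite B" using B fin finite_subset by blast
      then have "card ((H \<union> I) - B) = card (H \<union> I) - card B"
        using B by (intro card_Diff_subset) auto
      also have "card (H \<union> I) = card H + card I" using fin HI by (simp add: card_Un_disjoint)
      finally show ?thesis using B by simp
    qed
    then have "M \<le> card ((H \<union> I) - B)" unfolding M_def using cHI by simp
    then obtain A where A: "A \<subseteq> (H \<union> I) - B" "card A = M" by (meson obtain_subset_with_card_n)
    have ne: "\<forall>x\<in>B. \<forall>y\<in>A. \<not> E x y"
    proof (intro ballI notI)
      fix x y assume x: "x \<in> B" and y: "y \<in> A" and e: "E x y"
      have xI: "x \<in> I" using x B by blast
      have "y \<in> H \<or> y \<in> I" using y A by blast
      then show False
      proof
        assume "y \<in> H" then show False using HIe[OF _ xI] F(2)[OF e] by blast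
      next
        assume "y \<in> I" then show False using Iind[OF xI] e by blast
      qed
    qed
    have "B \<subseteq> V" "A \<subseteq> V" "B \<inter> A = {}" using A B HV IV by auto
    then show ?thesis using ne A(2) B(2) by (intro exI[of _ B] exI[of _ A]) simp
  next
    case False
    then have m2: "2 \<le> m" using cI by simp
    show ?thesis
    proof (cases "m \<le> card H")
      case True
      then obtain A where A: "A \<subseteq> H" "card A = m" by (meson obtain_subset_with_card_n)
      have "M \<le> card (V - (H \<union> X))" unfolding M_def using cR m2 by simp
      then obtain B where B: "B \<subseteq> V - (H \<union> X)" "card B = M" by (meson obtain_subset_with_card_n)
      have ne: "\<forall>x\<in>A. \<forall>y\<in>B. \<not> E x y" using A B Hnb by blast
      have "A \<subseteq> V" "B \<subseteq> V" "A \<inter> B = {}" using A B HV by auto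
      then show ?thesis using ne A(2) B(2) by (intro exI[of _ B] exI[of _ A]) simp
    next
      case False
      then have "card H + card I \<le> 2 * m - 2" using \<open>\<not> m \<le> card I\<close> by simp
      moreover have "2 * m \<le> k + 1" unfolding m_def using st by simp
      ultimately show ?thesis using cHI by simp
    qed
  qed
  from key obtain S T where ST: "S \<subseteq> V" "T \<subseteq> V" "S \<inter> T = {}" "card S = m" "card T = M"
    "\<forall>x\<in>S. \<forall>y\<in>T. \<not> E x y" by blast
  have hb: "has_bhole V E (card S) (card T) \<and> has_bhole V E (card T) (card S)"
    by (rule bhole_intro[OF sg ST(1) ST(2) ST(3)]) (use ST(6) in blast)
  show ?thesis using mM hb ST(4) ST(5) by auto
qed

theorem mainTheorem2:
  fixes V :: "'a set" and E :: "'a \<Rightarrow> 'a \<Rightarrow> bool"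
  assumes "simple_graph V E"
    and "connected_graph V E"
    and "sigma2 V E \<ge> enat (2 * bhole_number V E - 2)"
  shows "traceable V E"
proof (rule ccontr)
  note sg = assms(1) and conn = assms(2) and sig = assms(3)
  assume nt: "\<not> traceable V E"
  note F = sg_facts[OF sg]
  have sym: "\<And>a b. E a b \<Longrightarrow> E b a" using F(2) by blast
  have irr: "\<And>a. \<not> E a a" using F(3) by blast
  have finV: "finite V" using F(1) .
  define k where "k = bhole_number V E"
  define deg where "deg = degree V E"
  have Vne: "V \<noteq> {}" using conn by (simp add: connected_graph_def)
  have ex: "\<exists>k. \<exists>s t. s > 0 \<and> t > 0 \<and> s + t = k + 1 \<and> \<not> has_bhole V E s t"
  proof -
    have "\<not> has_bhole V E 1 (card V)"
    proof
      assume "has_bhole V E 1 (card V)"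
      then obtain S T where ST: "S \<subseteq> V" "T \<subseteq> V" "S \<inter> T = {}" "card S = 1" "card T = card V"
        unfolding has_bhole_def by blast
      have "finite S" "finite T" using ST finV finite_subset by auto
      then have "card (S \<union> T) = card V + 1" using ST by (simp add: card_Un_disjoint)
      moreover have "card (S \<union> T) \<le> card V" using ST finV by (simp add: card_mono)
      ultimately show False by simp
    qed
    moreover have "card V > 0" using Vne finV by (simp add: card_gt_0_iff)
    ultimately show ?thesis by (intro exI[of _ "card V"] exI[of _ 1] exI[of _ "card V"]) simp
  qed
  obtain s t where st: "s > 0" "t > 0" "s + t = k + 1" "\<not> has_bhole V E s t"
    using LeastI_ex[OF ex] unfolding k_def bhole_number_def by blast
  have dsum: "2 * k - 2 \<le> deg u + deg v" if "u \<in> V" "v \<in> V" "u \<noteq> v" "\<not> E u v" for u v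
  proof -
    have "sigma2 V E \<le> enat (deg u + deg v)" unfolding sigma2_def deg_def
      by (rule Inf_lower) (use that in blast)
    with sig have "enat (2 * k - 2) \<le> enat (deg u + deg v)" unfolding k_def by (rule order_trans)
    then show ?thesis by simp
  qed
  define Low where "Low = {v \<in> V. deg v + 1 \<le> k}"
  define R0 where "R0 = (if Low = {} then V else Low)"
  have R0V: "R0 \<subseteq> V" unfolding R0_def Low_def by auto
  have R0ne: "R0 \<noteq> {}" unfolding R0_def using Vne by auto
  have F1: "k \<le> deg v" if "v \<in> V" "v \<notin> R0" for v
    using that unfolding R0_def Low_def by (auto split: if_splits)
  have F2: "E v z" if "v \<in> V" "z \<in> R0" "v \<noteq> z" "deg v + 2 \<le> k" for v z
  proof (rule ccontr)
    assume ne: "\<not> E v z"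
    have "Low \<noteq> {}" using that unfolding Low_def by auto
    then have "R0 = Low" unfolding R0_def by simp
    then have "deg z + 1 \<le> k" "z \<in> V" using that(2) unfolding Low_def by auto
    with dsum[OF that(1) \<open>z \<in> V\<close> that(3) ne] that(4) show False by simp
  qed
  have F3: "k \<le> deg u + 1 \<or> k \<le> deg v + 1" if "u \<in> V" "v \<in> V" "u \<noteq> v" "\<not> E u v" for u v
    using dsum[OF that] by arith
  define PP where "PP = (\<lambda>p. is_path V E p \<and> hd p \<in> R0)"
  obtain r where r: "r \<in> R0" using R0ne by blast
  have PPr: "PP [r]" unfolding PP_def is_path_def using R0V r by auto
  have bnd: "\<forall>p. PP p \<longrightarrow> length p < card V + 1"
  proof (intro allI impI)
    fix p assume "PP p"
    then have "distinct p" "set p \<subseteq> V" unfolding PP_def is_path_def by auto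
    then have "length p \<le> card V" using finV by (metis card_mono distinct_card)
    then show "length p < card V + 1" by simp
  qed
  obtain P where PPP: "PP P" and Pmax: "\<forall>p. PP p \<longrightarrow> length p \<le> length P"
    using ex_has_greatest_nat[OF PPr bnd] by blast
  have P: "is_path V E P" and hdR0: "hd P \<in> R0" using PPP unfolding PP_def by auto
  have Pmax': "length Q \<le> length P" if "is_path V E Q" "hd Q = hd P" for Q
    using Pmax that hdR0 unfolding PP_def by auto
  have Pne: "P \<noteq> []" and dP: "distinct P" and PV: "set P \<subseteq> V" and sP: "successively E P"
    using P by (auto simp: is_path_alt)
  obtain y0 where y0: "y0 \<in> V" "y0 \<notin> set P"
  proof -
    have "set P \<noteq> V" using nt P unfolding traceable_def by blast
    then show ?thesis using PV that by blast
  qed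
  define HR where "HR = (\<lambda>a b. E a b \<and> a \<notin> set P \<and> b \<notin> set P)"
  define H where "H = {z. HR\<^sup>*\<^sup>* y0 z}"
  have y0H: "y0 \<in> H" unfolding H_def by simp
  have HP: "z \<in> V \<and> z \<notin> set P" if "z \<in> H" for z
  proof -
    have "HR\<^sup>*\<^sup>* y0 z" using that unfolding H_def by simp
    then show ?thesis
    proof (cases rule: rtranclp.cases)
      case rtrancl_refl then show ?thesis using y0 by simp
    next
      case (rtrancl_into_rtrancl b) then show ?thesis using F(4) unfolding HR_def by blast
    qed
  qed
  have HRsym: "HR b a" if "HR a b" for a b using that sym unfolding HR_def by blast
  have HRsym2: "HR\<^sup>*\<^sup>* b a" if "HR\<^sup>*\<^sup>* a b" for a b
    using that
  proof (induction rule: rtranclp_induct)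
    case base then show ?case by simp
  next
    case (step y z) then show ?case using HRsym by (meson converse_rtranclp_into_rtranclp)
  qed
  have Hq: "\<exists>q. is_path V E q \<and> set q \<inter> set P = {} \<and> set q \<subseteq> H \<and> hd q = a \<and> last q = b"
    if "a \<in> H" "b \<in> H" for a b
  proof -
    have "HR\<^sup>*\<^sup>* y0 a" "HR\<^sup>*\<^sup>* y0 b" using that unfolding H_def by auto
    then have ab: "HR\<^sup>*\<^sup>* a b" using HRsym2 by (meson rtranclp_trans)
    obtain q where q: "q \<noteq> []" "hd q = a" "last q = b" "distinct q" "successively HR q"
      "\<forall>x\<in>set q. HR\<^sup>*\<^sup>* a x" using rtranclp_path[OF ab] by blast
    have qH: "set q \<subseteq> H"
    proof
      fix x assume "x \<in> set q"
      then have "HR\<^sup>*\<^sup>* a x" using q by blast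
      then show "x \<in> H" using \<open>HR\<^sup>*\<^sup>* y0 a\<close> unfolding H_def by (meson mem_Collect_eq rtranclp_trans)
    qed
    have "successively E q" using q(5) by (rule successively_mono) (simp add: HR_def)
    moreover have "set q \<subseteq> V" "set q \<inter> set P = {}" using qH HP by blast+
    ultimately show ?thesis using q qH by (intro exI[of _ q]) (auto simp: is_path_alt)
  qed
  have HsubV: "H \<subseteq> V" and HdisjP: "H \<inter> set P = {}" using HP by blast+
  have finH: "finite H" using HsubV finV finite_subset by blast
  define X where "X = {x \<in> set P. \<exists>y\<in>H. E x y}"
  define J where "J = {i. i < length P \<and> P ! i \<in> X}"
  define I where "I = (\<lambda>i. P ! (i - 1)) ` (J - {0}) \<union> {last P}"
  have lastP: "last P = P ! (length P - 1)" using Pne by (simp add: last_conv_nth)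
  have hdP: "hd P = P ! 0" using Pne by (simp add: hd_conv_nth)
  have C1: "\<not> E (last P) y" if "y \<in> H" for y
  proof
    assume e: "E (last P) y"
    have "is_path V E (P @ [y])"
      using P e HP[OF that] by (auto simp: is_path_alt successively_append_iff)
    moreover have "hd (P @ [y]) = hd P" using Pne by simp
    ultimately have "length (P @ [y]) \<le> length P" by (rule Pmax')
    then show False by simp
  qed
  have C2: "\<not> E (P ! (i - 1)) y" if iJ: "i \<in> J" and ipos: "0 < i" and yH: "y \<in> H" for i y
  proof
    assume e: "E (P ! (i - 1)) y"
    have i: "i < length P" "P ! i \<in> X" using iJ unfolding J_def by auto
    then obtain b where b: "b \<in> H" "E (P ! i) b" unfolding X_def by blast
    obtain q where q: "is_path V E q" "set q \<inter> set P = {}" "hd q = y" "last q = b"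
      using Hq[OF yH b(1)] by blast
    have "is_path V E (take i P @ q @ drop i P) \<and> hd (take i P @ q @ drop i P) = hd P
       \<and> length (take i P @ q @ drop i P) = length P + length q"
      by (rule ins_path[OF _ P q(1) q(2) ipos i(1)]) (use sym e b q in auto)
    then have "length P + length q \<le> length P" using Pmax' by metis
    moreover have "q \<noteq> []" using q(1) by (simp add: is_path_alt)
    ultimately show False by simp
  qed
  have C3: "\<not> E (P ! (i - 1)) (P ! (j - 1))" if iJ: "i \<in> J" and jJ: "j \<in> J" and ipos: "0 < i" and ij: "i < j" for i j
  proof
    assume e: "E (P ! (i - 1)) (P ! (j - 1))"
    have i: "i < length P" "P ! i \<in> X" and j: "j < length P" "P ! j \<in> X"
      using iJ jJ unfolding J_def by auto
    obtain a where a: "a \<in> H" "E (P ! i) a" using i unfolding X_def by blast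
    obtain b where b: "b \<in> H" "E (P ! j) b" using j unfolding X_def by blast
    obtain q where q: "is_path V E q" "set q \<inter> set P = {}" "hd q = a" "last q = b"
      using Hq[OF a(1) b(1)] by blast
    have "length (take i P @ rev (take (j - i) (drop i P)) @ q @ drop j P) = length P + length q
       \<and> is_path V E (take i P @ rev (take (j - i) (drop i P)) @ q @ drop j P)
       \<and> hd (take i P @ rev (take (j - i) (drop i P)) @ q @ drop j P) = hd P"
      using rev_path[OF _ P q(1) q(2) ipos ij j(1) e] sym a b q by auto
    then have "length P + length q \<le> length P" using Pmax' by metis
    moreover have "q \<noteq> []" using q(1) by (simp add: is_path_alt)
    ultimately show False by simp
  qed
  have C4: "\<not> E (P ! (i - 1)) (last P)" if iJ: "i \<in> J" and ipos: "0 < i" for i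
  proof
    assume e: "E (P ! (i - 1)) (last P)"
    have i: "i < length P" "P ! i \<in> X" using iJ unfolding J_def by auto
    obtain a where a: "a \<in> H" "E (P ! i) a" using i unfolding X_def by blast
    have "length (take i P @ rev (drop i P) @ [a]) = length P + 1
       \<and> is_path V E (take i P @ rev (drop i P) @ [a])
       \<and> hd (take i P @ rev (drop i P) @ [a]) = hd P"
      using rev_end_path[OF _ P _ _ ipos i(1) e a(2)] sym HP[OF a(1)] by auto
    then have "length P + 1 \<le> length P" using Pmax' by metis
    then show False by simp
  qed
  have C5a: "y \<notin> R0" if "y \<in> H" "E (hd P) y" for y
  proof
    assume yR: "y \<in> R0"
    have "is_path V E (y # P)"
      using P HP[OF that(1)] sym[OF that(2)] Pne by (auto simp: is_path_alt successively_Cons)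
    then have "PP (y # P)" using yR unfolding PP_def by simp
    then have "length (y # P) \<le> length P" using Pmax by blast
    then show False by simp
  qed
  have C5b: "last P \<notin> R0" if "y \<in> H" "E (hd P) y" for y
  proof
    assume wR: "last P \<in> R0"
    have rs: "successively E (rev P)" by (rule succ_rev_sym[of E, OF sym sP])
    have "is_path V E (rev P @ [y])"
      using P HP[OF that(1)] that(2) Pne rs by (auto simp: is_path_alt successively_append_iff last_rev)
    moreover have "hd (rev P @ [y]) = last P" using Pne by (simp add: hd_rev)
    ultimately have "PP (rev P @ [y])" using wR unfolding PP_def by simp
    then have "length (rev P @ [y]) \<le> length P" using Pmax by blast
    then show False by simp
  qed
  have JP: "i < length P - 1" if "i \<in> J" for i
  proof -
    have i: "i < length P" "P ! i \<in> X" using that unfolding J_def by auto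
    then obtain y where "y \<in> H" "E (P ! i) y" unfolding X_def by blast
    moreover have "i \<noteq> length P - 1"
    proof
      assume "i = length P - 1"
      then have "P ! i = last P" using lastP by simp
      with C1 \<open>y \<in> H\<close> \<open>E (P ! i) y\<close> show False by simp
    qed
    ultimately show ?thesis using i by simp
  qed
  have XP: "X \<subseteq> set P" unfolding X_def by blast
  have XV: "X \<subseteq> V" using XP PV by blast
  have HX: "H \<inter> X = {}" using XP HdisjP by blast
  have IP: "I \<subseteq> set P"
  proof
    fix z assume "z \<in> I"
    then consider "z = last P" | i where "i \<in> J" "i \<noteq> 0" "z = P ! (i - 1)" unfolding I_def by blast
    then show "z \<in> set P"
    proof cases
      case 1 then show ?thesis using Pne by simp
    next
      case 2 then show ?thesis using JP[OF 2(1)] by simp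
    qed
  qed
  have IV: "I \<subseteq> V" using IP PV by blast
  have HI: "H \<inter> I = {}" using IP HdisjP by blast
  have Iind: "\<not> E a b" if aI: "a \<in> I" and bI: "b \<in> I" for a b
  proof -
    have aa: "a = last P \<or> (\<exists>i. i \<in> J \<and> i \<noteq> 0 \<and> a = P ! (i - 1))" using aI unfolding I_def by blast
    have bb: "b = last P \<or> (\<exists>j. j \<in> J \<and> j \<noteq> 0 \<and> b = P ! (j - 1))" using bI unfolding I_def by blast
    show ?thesis
    proof (cases "a = last P")
      case aw: True
      show ?thesis
      proof (cases "b = last P")
        case True then show ?thesis using aw irr by simp
      next
        case False
        then obtain j where j: "j \<in> J" "j \<noteq> 0" "b = P ! (j - 1)" using bb by blast
        then show ?thesis using aw C4[OF j(1)] sym by auto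
      qed
    next
      case False
      then obtain i where i: "i \<in> J" "i \<noteq> 0" "a = P ! (i - 1)" using aa by blast
      show ?thesis
      proof (cases "b = last P")
        case True then show ?thesis using i C4[OF i(1)] by auto
      next
        case False
        then obtain j where j: "j \<in> J" "j \<noteq> 0" "b = P ! (j - 1)" using bb by blast
        consider "i = j" | "i < j" | "j < i" by linarith
        then show ?thesis
        proof cases
          case 1 then show ?thesis using i j irr by simp
        next
          case 2 then show ?thesis using i j C3[OF i(1) j(1)] by auto
        next
          case 3 then show ?thesis using i j C3[OF j(1) i(1)] sym by auto
        qed
      qed
    qed
  qed
  have HIe: "\<not> E a b" if aH: "a \<in> H" and bI: "b \<in> I" for a b
  proof (cases "b = last P")
    case True then show ?thesis using C1[OF aH] sym by blast
  next
    case False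
    then obtain j where j: "j \<in> J" "j \<noteq> 0" "b = P ! (j - 1)" using bI unfolding I_def by blast
    then show ?thesis using C2[OF j(1) _ aH] sym by auto
  qed
  have Hnb: "b \<in> H \<union> X" if aH: "a \<in> H" and e: "E a b" for a b
  proof (cases "b \<in> set P")
    case True then show ?thesis using aH e sym unfolding X_def by blast
  next
    case False
    have "HR a b" using e False HP[OF aH] unfolding HR_def by blast
    then show ?thesis using aH unfolding H_def by (simp add: rtranclp.rtrancl_into_rtrancl)
  qed
  have finJ: "finite J" unfolding J_def by simp
  have cardX: "card X = card J"
  proof -
    have "X = (\<lambda>i. P ! i) ` J"
    proof
      show "X \<subseteq> (\<lambda>i. P ! i) ` J"
      proof
        fix x assume "x \<in> X"
        then have "x \<in> set P" using XP by blast
        then obtain i where "i < length P" "P ! i = x" by (metis in_set_conv_nth)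
        then show "x \<in> (\<lambda>i. P ! i) ` J" using \<open>x \<in> X\<close> unfolding J_def by auto
      qed
      show "(\<lambda>i. P ! i) ` J \<subseteq> X" unfolding J_def by auto
    qed
    moreover have "inj_on (\<lambda>i. P ! i) J" using dP unfolding J_def inj_on_def by (simp add: nth_eq_iff_index_eq)
    ultimately show ?thesis by (simp add: card_image)
  qed
  have cardI: "card I = card (J - {0}) + 1"
  proof -
    have inj: "inj_on (\<lambda>i. P ! (i - 1)) (J - {0})"
    proof (rule inj_onI)
      fix i j assume ij: "i \<in> J - {0}" "j \<in> J - {0}" "P ! (i - 1) = P ! (j - 1)"
      have "i - 1 < length P" "j - 1 < length P" using JP ij by fastforce+
      then have "i - 1 = j - 1" using ij(3) dP by (simp add: nth_eq_iff_index_eq)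
      then show "i = j" using ij by auto
    qed
    have nin: "last P \<notin> (\<lambda>i. P ! (i - 1)) ` (J - {0})"
    proof
      assume "last P \<in> (\<lambda>i. P ! (i - 1)) ` (J - {0})"
      then obtain i where i0: "i \<in> J - {0}" "last P = P ! (i - 1)" by blast
      then have i: "i \<in> J" "i \<noteq> 0" "P ! (i - 1) = P ! (length P - 1)" using lastP by auto
      then have "i - 1 = length P - 1" using dP JP[OF i(1)] by (simp add: nth_eq_iff_index_eq)
      then show False using JP[OF i(1)] by simp
    qed
    have "card I = card ((\<lambda>i. P ! (i - 1)) ` (J - {0})) + 1"
      unfolding I_def using nin finJ by (simp add: card_insert_if)
    then show ?thesis using inj by (simp add: card_image)
  qed
  have degH: "deg y + 1 \<le> card H + card J" if yH: "y \<in> H" for y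
  proof -
    have "{z \<in> V. E y z} \<subseteq> (H - {y}) \<union> X" using Hnb[OF yH] irr by blast
    then have "deg y \<le> card ((H - {y}) \<union> X)" unfolding deg_def degree_def
      using finH finite_subset[OF XP] by (intro card_mono) auto
    also have "\<dots> \<le> card (H - {y}) + card X" by (rule card_Un_le)
    also have "card (H - {y}) = card H - 1" using yH finH by simp
    finally show ?thesis using cardX yH finH card_gt_0_iff[of H] by fastforce
  qed
  have finI: "finite I" unfolding I_def using finJ by simp
  have wI: "last P \<in> I" unfolding I_def by blast
  have finX: "finite X" using finite_subset[OF XP] by simp
  have key: "k + 1 \<le> card H + card I \<and> (\<exists>z\<in>I. k \<le> deg z + 1)"
  proof (cases "0 \<in> J")
    case False
    have Jne: "J \<noteq> {}"
    proof
      assume J0: "J = {}"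
      then have X0: "X = {}" using cardX finX by simp
      have cl: "b \<in> H" if "a \<in> H" "E a b" for a b using Hnb[OF that] X0 by blast
      have hPV: "hd P \<in> V" using PV Pne by (meson hd_in_set subsetD)
      obtain q where q: "is_path V E q" "hd q = y0" "last q = hd P"
        using conn y0(1) hPV unfolding connected_graph_def by blast
      have qne: "q \<noteq> []" using q(1) unfolding is_path_def by simp
      have allH: "q ! i \<in> H" if "i < length q" for i
        using that
      proof (induction i)
        case 0 then show ?case using q(2) y0H qne by (simp add: hd_conv_nth)
      next
        case (Suc i)
        then have "E (q ! i) (q ! Suc i)" using q(1) unfolding is_path_def by simp
        with Suc show ?case using cl by simp
      qed
      have "last q \<in> H" using allH[of "length q - 1"] qne by (simp add: last_conv_nth)
      then show False using q(3) HdisjP Pne by auto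
    qed
    then obtain i where i: "i \<in> J" by blast
    have i0: "i \<noteq> 0"
    proof
      assume "i = 0"
      with False i show False by simp
    qed
    have cI: "card I = card J + 1" using cardI False by simp
    have ny: "\<not> E (hd P) y0"
    proof
      assume e: "E (hd P) y0"
      have "P ! 0 \<in> X" unfolding X_def using e y0H hdP Pne by (auto simp: hd_conv_nth)
      then have "0 \<in> J" unfolding J_def using Pne by simp
      then show False using False by simp
    qed
    have dy: "k \<le> deg y0 + 1"
    proof (rule ccontr)
      assume "\<not> ?thesis"
      then have "deg y0 + 2 \<le> k" by simp
      moreover have "y0 \<noteq> hd P" using y0(2) Pne by auto
      ultimately have "E y0 (hd P)" using F2[OF y0(1) hdR0] by blast
      then show False using ny sym[of y0 "hd P"] by blast
    qed
    have c: "k + 1 \<le> card H + card I" using degH[OF y0H] dy cI by simp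
    have z: "\<exists>z\<in>I. k \<le> deg z + 1"
    proof -
      have z1I: "P ! (i - 1) \<in> I" using i i0 unfolding I_def by blast
      have iP: "i - 1 < length P - 1" "i - 1 < length P" using JP[OF i] by auto
      have ne: "P ! (i - 1) \<noteq> last P"
        using lastP iP dP by (simp add: nth_eq_iff_index_eq)
      have "P ! (i - 1) \<in> V" "last P \<in> V" using IV z1I wI by auto
      from F3[OF this ne Iind[OF z1I wI]] show ?thesis using z1I wI by blast
    qed
    show ?thesis using c z by blast
  next
    case True
    then have "P ! 0 \<in> X" unfolding J_def by simp
    then obtain y where y0': "y \<in> H" "E (P ! 0) y" unfolding X_def by blast
    then have y: "y \<in> H" "E (hd P) y" using hdP by auto
    have "y \<notin> R0" by (rule C5a[OF y])
    moreover have "y \<in> V" using HP[OF y(1)] by blast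
    ultimately have ky: "k \<le> deg y" using F1 by blast
    have "J \<noteq> {}" using True by blast
    then have "card J \<ge> 1" using finJ by (simp add: Suc_le_eq card_gt_0_iff)
    then have cI: "card I = card J" using cardI True finJ by simp
    have c: "k + 1 \<le> card H + card I" using degH[OF y(1)] ky cI by simp
    have "last P \<in> V" using IV wI by blast
    moreover have "last P \<notin> R0" by (rule C5b[OF y])
    ultimately have "k \<le> deg (last P)" using F1 by blast
    then have "k \<le> deg (last P) + 1" by simp
    then show ?thesis using c wI by blast
  qed
  then obtain z where zI: "z \<in> I" and kz: "k \<le> deg z + 1" and cHI: "k + 1 \<le> card H + card I" by blast
  have cR: "k \<le> card (V - (H \<union> X)) + 1"
  proof -
    define N where "N = {v \<in> V. E z v}"
    have degz: "deg z = card N" unfolding N_def deg_def degree_def by simp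
    have finN: "finite N" unfolding N_def using finV by simp
    have d1: "H \<inter> N = {}"
    proof (rule ccontr)
      assume "H \<inter> N \<noteq> {}"
      then obtain v where v: "v \<in> H" "E z v" unfolding N_def by blast
      then show False using HIe[OF v(1) zI] sym[OF v(2)] by simp
    qed
    have d2: "I \<inter> N = {}"
    proof (rule ccontr)
      assume "I \<inter> N \<noteq> {}"
      then obtain v where v: "v \<in> I" "E z v" unfolding N_def by blast
      then show False using Iind[OF zI v(1)] by simp
    qed
    have e1: "card (H \<union> I) = card H + card I" by (rule card_Un_disjoint[OF finH finI HI])
    have d3: "(H \<union> I) \<inter> N = {}" using d1 d2 by blast
    have e2: "card (H \<union> I \<union> N) = card (H \<union> I) + card N"
      using finH finI finN d3 by (intro card_Un_disjoint) auto
    have sub: "H \<union> I \<union> N \<subseteq> V" using HsubV IV unfolding N_def by blast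
    have e3: "card (H \<union> I \<union> N) \<le> card V" using finV sub by (rule card_mono)
    have A: "card H + card I + deg z \<le> card V" using e1 e2 e3 degz by simp
    have HXV: "H \<union> X \<subseteq> V" using HsubV XV by blast
    have e4: "card (V - (H \<union> X)) = card V - card (H \<union> X)"
      using finite_subset[OF HXV finV] HXV by (rule card_Diff_subset)
    have e5: "card (H \<union> X) = card H + card X" by (rule card_Un_disjoint[OF finH finX HX])
    have "card J \<le> card (J - {0}) + 1" using finJ by (simp add: card_Diff_singleton_if) arith
    then have e6: "card X \<le> card I" using cardX cardI by simp
    show ?thesis using A e4 e5 e6 kz by linarith
  qed
  have "I \<noteq> {}" using wI by blast
  then have cI1: "1 \<le> card I" using finI by (simp add: Suc_le_eq card_gt_0_iff)
  have hb: "has_bhole V E s t"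
    using hole_lemma[OF sg HsubV IV XV HI HX Hnb Iind HIe cHI cI1 cR st(1) st(2) st(3)] .
  then show False using st(4) by simp
qed

end
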